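(* Let $\mathbb{T}$ be a time scale, $\alpha\in]0,1]$, and let $f,g:\mathbb{T}\to\mathbb{R}$ be nabla fractional differentiable of order $\alpha$ at $t\in\mathbb{T}_\kappa$. Then: (i) $f+g$ is nabla fractional differentiable of order $\alpha$ at $t$ with $(f+g)^{\nabla^\alpha}(t)=f^{\nabla^\alpha}(t)+g^{\nabla^\alpha}(t)$; (ii) for every $\lambda\in\mathbb{R}$, $\lambda f$ is nabla fractional differentiable of order $\alpha$ at $t$ with $(\lambda f)^{\nabla^\alpha}(t)=\lambda f^{\nabla^\alpha}(t)$; (iii) if $f$ and $g$ are continuous, then $fg$ is nabla fractional differentiable of order $\alpha$ at $t$ with $$(fg)^{\nabla^\alpha}(t)=f^{\nabla^\alpha}(t)g(t)+f^\rho(t)g^{\nabla^\alpha}(t)=f^{\nabla^\alpha}(t)g^\rho(t)+f(t)g^{\nabla^\alpha}(t);$$ (iv) if $f$ is continuous and $f^\rho(t)f(t)\neq0$, then $1/f$ is nabla fractional differentiable of order $\alpha$ at $t$ with $\left(\frac1f\right)^{\nabla^\alpha}(t)=-\frac{f^{\nabla^\alpha}(t)}{f^\rho(t)f(t)}$; (v) if $f$ and $g$ are continuous and $g^\rho(t)g(t)\neq0$, then $f/g$ is nabla fractional differentiable of order $\alpha$ at $t$ with $$\left(\frac fg\right)^{\nabla^\alpha}(t)=\frac{f^{\nabla^\alpha}(t)g(t)-f(t)g^{\nabla^\alpha}(t)}{g^\rho(t)g(t)}.$$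
   Context: A time scale $\mathbb{T}$ is a nonempty closed subset of $\mathbb{R}$ with the induced topology. $\rho(t)=\sup\{s\in\mathbb{T}: s<t\}$ (with $\sup\emptyset=\inf\mathbb{T}$), $\sigma(t)=\inf\{s\in\mathbb{T}:s>t\}$ (with $\inf\emptyset=\sup\mathbb{T}$), $f^\rho=f\circ\rho$. $\mathbb{T}_\kappa=\mathbb{T}\setminus\{\inf\mathbb{T}\}$ if $\inf\mathbb{T}$ is finite with $\sigma(\inf\mathbb{T})>\inf\mathbb{T}$, otherwise $\mathbb{T}_\kappa=\mathbb{T}$. Let $A=\,]0,1]\cap\{1/q: q\text{ odd positive integer}\}$; for $\alpha=1/q\in A$, $x^\alpha$ is the real $q$-th root. For $t\in\mathbb{T}_\kappa$, $f^{\nabla^\alpha}(t)$ is the real number (if it exists) such that for every $\varepsilon>0$ there is $\delta>0$ with $\big|[f(s)-f^\rho(t)]-f^{\nabla^\alpha}(t)[s-\rho(t)]^\alpha\big|\le\varepsilon|s-\rho(t)|^\alpha$ for all $s\in\,]t-\delta,t+\delta[\,\cap\mathbb{T}$ if $\alpha\in A$, resp. all $s\in[t,t+\delta[\,\cap\mathbb{T}$ if $\alpha\notin A$; if it exists, $f$ is nabla fractional differentiable of order $\alpha$ at $t$. *)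

theory Defs
  imports Complex_Main
begin

definition time_scale :: "real set \<Rightarrow> bool" where
  "time_scale T \<longleftrightarrow> T \<noteq> {} \<and> closed T"

text \<open>backward jump operator; sup of the empty set is inf T (then t = min T)\<close>
definition rho :: "real set \<Rightarrow> real \<Rightarrow> real" where
  "rho T t = (if {s\<in>T. s < t} = {} then Inf T else Sup {s\<in>T. s < t})"

definition sigma :: "real set \<Rightarrow> real \<Rightarrow> real" where
  "sigma T t = (if {s\<in>T. s > t} = {} then Sup T else Inf {s\<in>T. s > t})"

definition T_kappa :: "real set \<Rightarrow> real set" where
  "T_kappa T = (if bdd_below T \<and> sigma T (Inf T) > Inf T then T - {Inf T} else T)"

definition in_A :: "real \<Rightarrow> bool" where
  "in_A \<alpha> \<longleftrightarrow> (\<exists>q::nat. odd q \<and> q > 0 \<and> \<alpha> = 1 / real q)"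

text \<open>x^alpha: real q-th root for alpha = 1/q in A, otherwise x powr alpha (used for x \<ge> 0)\<close>
definition fpow :: "real \<Rightarrow> real \<Rightarrow> real" where
  "fpow \<alpha> x = (if in_A \<alpha> then root (nat \<lfloor>1 / \<alpha>\<rfloor>) x else x powr \<alpha>)"

definition has_nabla_frac_deriv ::
  "real set \<Rightarrow> real \<Rightarrow> (real \<Rightarrow> real) \<Rightarrow> real \<Rightarrow> real \<Rightarrow> bool" where
  "has_nabla_frac_deriv T \<alpha> f D t \<longleftrightarrow> t \<in> T_kappa T \<and>
     (\<forall>\<epsilon>>0. \<exists>\<delta>>0. \<forall>s\<in>T.
        (if in_A \<alpha> then t - \<delta> < s \<and> s < t + \<delta> else t \<le> s \<and> s < t + \<delta>) \<longrightarrow>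
        \<bar>(f s - f (rho T t)) - D * fpow \<alpha> (s - rho T t)\<bar> \<le> \<epsilon> * fpow \<alpha> \<bar>s - rho T t\<bar>)"

end

theory Submission
  imports Defs
begin

locale fr_setup =
  fixes T :: "real set" and P :: "real \<Rightarrow> real \<Rightarrow> bool" and p q :: "real \<Rightarrow> real" and r t :: real
  assumes mono: "\<And>d1 d2 s. d1 \<le> d2 \<Longrightarrow> P d1 s \<Longrightarrow> P d2 s"
    and near: "\<And>d s. P d s \<Longrightarrow> \<bar>s - t\<bar> < d"
    and pq: "\<And>d s. s \<in> T \<Longrightarrow> P d s \<Longrightarrow> \<bar>p s\<bar> \<le> q s"
begin

definition HD where
  "HD f D \<longleftrightarrow> (\<forall>\<epsilon>>0. \<exists>\<delta>>0. \<forall>s\<in>T. P \<delta> s \<longrightarrow> \<bar>(f s - f r) - D * p s\<bar> \<le> \<epsilon> * q s)"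

definition cont where
  "cont f \<longleftrightarrow> (\<forall>\<eta>>0. \<exists>d>0. \<forall>s\<in>T. \<bar>s - t\<bar> < d \<longrightarrow> \<bar>f s - f t\<bar> < \<eta>)"

lemma add:
  assumes f: "HD f Df" and g: "HD g Dg"
  shows "HD (\<lambda>s. f s + g s) (Df + Dg)"
  unfolding HD_def
proof (intro allI impI)
  fix \<epsilon> :: real assume e: "\<epsilon> > 0"
  obtain d1 where d1: "d1 > 0" "\<forall>s\<in>T. P d1 s \<longrightarrow> \<bar>(f s - f r) - Df * p s\<bar> \<le> \<epsilon>/2 * q s"
    using f e unfolding HD_def by (meson half_gt_zero)
  obtain d2 where d2: "d2 > 0" "\<forall>s\<in>T. P d2 s \<longrightarrow> \<bar>(g s - g r) - Dg * p s\<bar> \<le> \<epsilon>/2 * q s"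
    using g e unfolding HD_def by (meson half_gt_zero)
  show "\<exists>\<delta>>0. \<forall>s\<in>T. P \<delta> s \<longrightarrow> \<bar>(f s + g s - (f r + g r)) - (Df + Dg) * p s\<bar> \<le> \<epsilon> * q s"
  proof (intro exI[of _ "min d1 d2"] conjI ballI impI)
    show "min d1 d2 > 0" using d1 d2 by simp
    fix s assume s: "s \<in> T" "P (min d1 d2) s"
    have "P d1 s" "P d2 s" using s mono by (meson min.cobounded1 min.cobounded2)+
    then have a: "\<bar>(f s - f r) - Df * p s\<bar> \<le> \<epsilon>/2 * q s" "\<bar>(g s - g r) - Dg * p s\<bar> \<le> \<epsilon>/2 * q s"
      using d1 d2 s by auto
    have "(f s + g s - (f r + g r)) - (Df + Dg) * p s = ((f s - f r) - Df * p s) + ((g s - g r) - Dg * p s)"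
      by (simp add: algebra_simps)
    then have "\<bar>(f s + g s - (f r + g r)) - (Df + Dg) * p s\<bar> \<le> \<bar>(f s - f r) - Df * p s\<bar> + \<bar>(g s - g r) - Dg * p s\<bar>"
      by (simp only: abs_triangle_ineq)
    also have "\<dots> \<le> \<epsilon>/2 * q s + \<epsilon>/2 * q s" using a by linarith
    finally show "\<bar>(f s + g s - (f r + g r)) - (Df + Dg) * p s\<bar> \<le> \<epsilon> * q s" by simp
  qed
qed

lemma scale:
  assumes f: "HD f Df"
  shows "HD (\<lambda>s. c * f s) (c * Df)"
  unfolding HD_def
proof (intro allI impI)
  fix \<epsilon> :: real assume e: "\<epsilon> > 0"
  have e1: "\<epsilon> / (\<bar>c\<bar> + 1) > 0" using e by (simp add: add_pos_nonneg)
  obtain d1 where d1: "d1 > 0" "\<forall>s\<in>T. P d1 s \<longrightarrow> \<bar>(f s - f r) - Df * p s\<bar> \<le> \<epsilon> / (\<bar>c\<bar> + 1) * q s"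
    using f e1 unfolding HD_def by meson
  show "\<exists>\<delta>>0. \<forall>s\<in>T. P \<delta> s \<longrightarrow> \<bar>(c * f s - c * f r) - (c * Df) * p s\<bar> \<le> \<epsilon> * q s"
  proof (intro exI[of _ d1] conjI ballI impI)
    show "d1 > 0" using d1 by simp
    fix s assume s: "s \<in> T" "P d1 s"
    have q0: "q s \<ge> 0" using pq[OF s] by linarith
    have a: "\<bar>(f s - f r) - Df * p s\<bar> \<le> \<epsilon> / (\<bar>c\<bar> + 1) * q s" using d1 s by auto
    have "\<bar>(c * f s - c * f r) - (c * Df) * p s\<bar> = \<bar>c\<bar> * \<bar>(f s - f r) - Df * p s\<bar>"
      by (simp add: abs_mult[symmetric] algebra_simps)
    also have "\<dots> \<le> (\<bar>c\<bar> + 1) * (\<epsilon> / (\<bar>c\<bar> + 1) * q s)"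
      by (rule mult_mono) (use a q0 e in auto)
    also have "\<dots> = \<epsilon> * q s" by (simp add: field_simps add_pos_nonneg)
    finally show "\<bar>(c * f s - c * f r) - (c * Df) * p s\<bar> \<le> \<epsilon> * q s" .
  qed
qed

lemma bnd:
  fixes x y A B :: real
  assumes "\<bar>x\<bar> \<le> A" "\<bar>y\<bar> \<le> B"
  shows "\<bar>x * y\<bar> \<le> A * B"
  using assms by (simp add: abs_mult mult_mono')

lemma tri3: fixes x y z :: real shows "\<bar>x + y + z\<bar> \<le> \<bar>x\<bar> + \<bar>y\<bar> + \<bar>z\<bar>"
  by linarith

lemma prod2:
  assumes f: "HD f Df" and g: "HD g Dg" and cf: "cont f"
  shows "HD (\<lambda>s. f s * g s) (Df * g r + f t * Dg)"
  unfolding HD_def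
proof (intro allI impI)
  fix \<epsilon> :: real assume e: "\<epsilon> > 0"
  define a where "a = \<bar>g r\<bar> + 1"
  define b where "b = \<bar>f t\<bar> + 1"
  define c where "c = \<bar>Dg\<bar> + 1"
  have a0: "a > 0" unfolding a_def by (simp add: add_pos_nonneg)
  have b0: "b > 0" unfolding b_def by (simp add: add_pos_nonneg)
  have c0: "c > 0" unfolding c_def by (simp add: add_pos_nonneg)
  have ea: "\<epsilon> / (3*a) > 0" using e a0 by simp
  have eb: "\<epsilon> / (3*b) > 0" using e b0 by simp
  obtain d1 where d1: "d1 > 0" "\<forall>s\<in>T. P d1 s \<longrightarrow> \<bar>(f s - f r) - Df * p s\<bar> \<le> \<epsilon> / (3*a) * q s"
    using f[unfolded HD_def, rule_format, OF ea] by blast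
  obtain d2 where d2: "d2 > 0" "\<forall>s\<in>T. P d2 s \<longrightarrow> \<bar>(g s - g r) - Dg * p s\<bar> \<le> \<epsilon> / (3*b) * q s"
    using g[unfolded HD_def, rule_format, OF eb] by blast
  define \<eta> where "\<eta> = min 1 (\<epsilon> / (3*c))"
  have \<eta>0: "\<eta> > 0" using e c0 by (simp add: \<eta>_def)
  obtain d3 where d3: "d3 > 0" "\<forall>s\<in>T. \<bar>s - t\<bar> < d3 \<longrightarrow> \<bar>f s - f t\<bar> < \<eta>"
    using cf[unfolded cont_def, rule_format, OF \<eta>0] by blast
  show "\<exists>\<delta>>0. \<forall>s\<in>T. P \<delta> s \<longrightarrow> \<bar>(f s * g s - f r * g r) - (Df * g r + f t * Dg) * p s\<bar> \<le> \<epsilon> * q s"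
  proof (intro exI[of _ "min d1 (min d2 d3)"] conjI ballI impI)
    show "min d1 (min d2 d3) > 0" using d1 d2 d3 by simp
    fix s assume s: "s \<in> T" "P (min d1 (min d2 d3)) s"
    have pqs: "\<bar>p s\<bar> \<le> q s" using pq[OF s] .
    have m1: "min d1 (min d2 d3) \<le> d1" and m2: "min d1 (min d2 d3) \<le> d2" and m3: "min d1 (min d2 d3) \<le> d3"
      by simp_all
    have E1: "\<bar>(f s - f r) - Df * p s\<bar> \<le> \<epsilon> / (3*a) * q s"
      using d1(2) s(1) mono[OF m1 s(2)] by blast
    have E2: "\<bar>(g s - g r) - Dg * p s\<bar> \<le> \<epsilon> / (3*b) * q s"
      using d2(2) s(1) mono[OF m2 s(2)] by blast
    have "\<bar>s - t\<bar> < d3" using near[OF s(2)] m3 by linarith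
    then have "\<bar>f s - f t\<bar> < \<eta>" using d3(2) s(1) by blast
    then have F1: "\<bar>f s - f t\<bar> \<le> \<epsilon> / (3*c)" and F2: "\<bar>f s\<bar> \<le> b"
      unfolding \<eta>_def b_def by linarith+
    have id: "(f s * g s - f r * g r) - (Df * g r + f t * Dg) * p s =
       ((f s - f r) - Df * p s) * g r + f s * ((g s - g r) - Dg * p s) + (f s - f t) * (Dg * p s)"
      by (simp add: algebra_simps)
    have ga: "\<bar>g r\<bar> \<le> a" by (simp add: a_def)
    have dc: "\<bar>Dg\<bar> \<le> c" by (simp add: c_def)
    have t1: "\<bar>((f s - f r) - Df * p s) * g r\<bar> \<le> (\<epsilon> / (3*a) * q s) * a"
      by (rule bnd[OF E1 ga])
    have t2: "\<bar>f s * ((g s - g r) - Dg * p s)\<bar> \<le> b * (\<epsilon> / (3*b) * q s)"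
      by (rule bnd[OF F2 E2])
    have t3: "\<bar>(f s - f t) * (Dg * p s)\<bar> \<le> (\<epsilon> / (3*c)) * (c * q s)"
      by (rule bnd[OF F1 bnd[OF dc pqs]])
    have r1: "(\<epsilon> / (3*a) * q s) * a = \<epsilon>/3 * q s" using a0 by simp
    have r2: "b * (\<epsilon> / (3*b) * q s) = \<epsilon>/3 * q s" using b0 by simp
    have r3: "(\<epsilon> / (3*c)) * (c * q s) = \<epsilon>/3 * q s" using c0 by simp
    have "\<bar>(f s * g s - f r * g r) - (Df * g r + f t * Dg) * p s\<bar> \<le>
        \<epsilon>/3 * q s + \<epsilon>/3 * q s + \<epsilon>/3 * q s"
      unfolding id using t1 t2 t3 r1 r2 r3 tri3[of "((f s - f r) - Df * p s) * g r" "f s * ((g s - g r) - Dg * p s)" "(f s - f t) * (Dg * p s)"]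
      by linarith
    then show "\<bar>(f s * g s - f r * g r) - (Df * g r + f t * Dg) * p s\<bar> \<le> \<epsilon> * q s" by simp
  qed
qed

lemma prod1:
  assumes f: "HD f Df" and g: "HD g Dg" and cg: "cont g"
  shows "HD (\<lambda>s. f s * g s) (Df * g t + f r * Dg)"
proof -
  have "HD (\<lambda>s. g s * f s) (Dg * f r + g t * Df)" by (rule prod2[OF g f cg])
  moreover have "(\<lambda>s. g s * f s) = (\<lambda>s. f s * g s)" by (simp add: mult.commute)
  moreover have "Dg * f r + g t * Df = Df * g t + f r * Dg" by (simp add: algebra_simps)
  ultimately show ?thesis by simp
qed

lemma cont_inv:
  fixes f :: "real \<Rightarrow> real"
  assumes cf: "cont f" and ft: "f t \<noteq> 0"
  shows "cont (\<lambda>s. 1 / f s)"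
  unfolding cont_def
proof (intro allI impI)
  fix \<eta> :: real assume e: "\<eta> > 0"
  define m where "m = \<bar>f t\<bar> / 2"
  have m0: "m > 0" using ft by (simp add: m_def)
  define \<eta>' where "\<eta>' = min m (\<eta> * \<bar>f t\<bar> * m)"
  have e': "\<eta>' > 0" using e m0 ft by (simp add: \<eta>'_def)
  obtain d where d: "d > 0" "\<forall>s\<in>T. \<bar>s - t\<bar> < d \<longrightarrow> \<bar>f s - f t\<bar> < \<eta>'"
    using cf[unfolded cont_def, rule_format, OF e'] by blast
  show "\<exists>d>0. \<forall>s\<in>T. \<bar>s - t\<bar> < d \<longrightarrow> \<bar>1 / f s - 1 / f t\<bar> < \<eta>"
  proof (intro exI[of _ d] conjI ballI impI)
    show "d > 0" by fact
    fix s assume s: "s \<in> T" "\<bar>s - t\<bar> < d"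
    have fs: "\<bar>f s - f t\<bar> < \<eta>'" using d s by blast
    have fsm: "\<bar>f s\<bar> \<ge> m" using fs unfolding \<eta>'_def m_def by linarith
    have fs0: "f s \<noteq> 0" using fsm m0 by auto
    have "1 / f s - 1 / f t = (f t - f s) / (f s * f t)" using fs0 ft by (simp add: field_simps)
    then have "\<bar>1 / f s - 1 / f t\<bar> = \<bar>f t - f s\<bar> / (\<bar>f s\<bar> * \<bar>f t\<bar>)" by (simp add: abs_mult)
    also have "\<dots> \<le> \<eta>' / (m * \<bar>f t\<bar>)"
      by (rule frac_le) (use fs fsm m0 ft in \<open>auto simp: abs_minus_commute intro: mult_right_mono\<close>)
    also have "\<dots> \<le> (\<eta> * \<bar>f t\<bar> * m) / (m * \<bar>f t\<bar>)"
      by (rule divide_right_mono) (use m0 in \<open>auto simp: \<eta>'_def\<close>)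
    also have "\<dots> = \<eta>" using m0 ft by simp
    finally have le: "\<bar>1 / f s - 1 / f t\<bar> \<le> \<eta>" .
    show "\<bar>1 / f s - 1 / f t\<bar> < \<eta>"
    proof -
      have "\<bar>f t - f s\<bar> / (\<bar>f s\<bar> * \<bar>f t\<bar>) < \<eta>' / (\<bar>f s\<bar> * \<bar>f t\<bar>)"
        using fs fs0 ft by (simp add: abs_minus_commute divide_strict_right_mono)
      also have "\<dots> \<le> \<eta>' / (m * \<bar>f t\<bar>)"
        by (rule divide_left_mono) (use e' fsm m0 ft in \<open>auto intro: mult_right_mono\<close>)
      also have "\<dots> \<le> \<eta>"
        using \<open>\<eta>' / (m * \<bar>f t\<bar>) \<le> (\<eta> * \<bar>f t\<bar> * m) / (m * \<bar>f t\<bar>)\<close> m0 ft by simp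
      finally show ?thesis using \<open>\<bar>1 / f s - 1 / f t\<bar> = \<bar>f t - f s\<bar> / (\<bar>f s\<bar> * \<bar>f t\<bar>)\<close> by simp
    qed
  qed
qed

lemma recip:
  assumes f: "HD f Df" and cf: "cont f" and ft: "f t \<noteq> 0" and fr: "f r \<noteq> 0"
  shows "HD (\<lambda>s. 1 / f s) (- Df / (f r * f t))"
  unfolding HD_def
proof (intro allI impI)
  fix \<epsilon> :: real assume e: "\<epsilon> > 0"
  define m where "m = \<bar>f t\<bar> / 2"
  have m0: "m > 0" using ft by (simp add: m_def)
  define c where "c = \<bar>Df\<bar> + 1"
  have c0: "c > 0" unfolding c_def by (simp add: add_pos_nonneg)
  have e1: "\<epsilon> * m * \<bar>f r\<bar> / 2 > 0" using e m0 fr by simp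
  obtain d1 where d1: "d1 > 0" "\<forall>s\<in>T. P d1 s \<longrightarrow> \<bar>(f s - f r) - Df * p s\<bar> \<le> \<epsilon> * m * \<bar>f r\<bar> / 2 * q s"
    using f[unfolded HD_def, rule_format, OF e1] by blast
  define \<eta> where "\<eta> = min m (\<epsilon> * \<bar>f r\<bar> * \<bar>f t\<bar> * m / (2 * c))"
  have \<eta>0: "\<eta> > 0" using e c0 m0 fr ft by (simp add: \<eta>_def)
  obtain d3 where d3: "d3 > 0" "\<forall>s\<in>T. \<bar>s - t\<bar> < d3 \<longrightarrow> \<bar>f s - f t\<bar> < \<eta>"
    using cf[unfolded cont_def, rule_format, OF \<eta>0] by blast
  show "\<exists>\<delta>>0. \<forall>s\<in>T. P \<delta> s \<longrightarrow> \<bar>(1 / f s - 1 / f r) - (- Df / (f r * f t)) * p s\<bar> \<le> \<epsilon> * q s"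
  proof (intro exI[of _ "min d1 d3"] conjI ballI impI)
    show "min d1 d3 > 0" using d1 d3 by simp
    fix s assume s: "s \<in> T" "P (min d1 d3) s"
    have pqs: "\<bar>p s\<bar> \<le> q s" using pq[OF s] .
    have q0: "q s \<ge> 0" using pqs by linarith
    have m1: "min d1 d3 \<le> d1" and m3: "min d1 d3 \<le> d3" by simp_all
    have E1: "\<bar>(f s - f r) - Df * p s\<bar> \<le> \<epsilon> * m * \<bar>f r\<bar> / 2 * q s"
      using d1(2) s(1) mono[OF m1 s(2)] by blast
    have "\<bar>s - t\<bar> < d3" using near[OF s(2)] m3 by linarith
    then have fs: "\<bar>f s - f t\<bar> < \<eta>" using d3(2) s(1) by blast
    then have F1: "\<bar>f s - f t\<bar> \<le> \<epsilon> * \<bar>f r\<bar> * \<bar>f t\<bar> * m / (2 * c)"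
      unfolding \<eta>_def by linarith
    have fsm: "\<bar>f s\<bar> \<ge> m" using fs unfolding \<eta>_def m_def by linarith
    have fs0: "f s \<noteq> 0" using fsm m0 by auto
    have id: "(1 / f s - 1 / f r) - (- Df / (f r * f t)) * p s =
       - ((f s - f r) - Df * p s) / (f s * f r) + ((f s - f t) * (Df * p s)) / (f r * f t * f s)"
      using fs0 fr ft by (simp add: field_simps)
    have dc: "\<bar>Df\<bar> \<le> c" by (simp add: c_def)
    have t1: "\<bar>- ((f s - f r) - Df * p s) / (f s * f r)\<bar> \<le> (\<epsilon> * m * \<bar>f r\<bar> / 2 * q s) / (m * \<bar>f r\<bar>)"
      unfolding abs_divide abs_minus_cancel abs_mult
      by (rule frac_le) (use E1 fsm m0 fr e q0 in \<open>auto intro: mult_right_mono\<close>)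
    have t2: "\<bar>((f s - f t) * (Df * p s)) / (f r * f t * f s)\<bar> \<le>
        ((\<epsilon> * \<bar>f r\<bar> * \<bar>f t\<bar> * m / (2 * c)) * (c * q s)) / (\<bar>f r\<bar> * \<bar>f t\<bar> * m)"
      unfolding abs_divide abs_mult[of "f r * f t"] abs_mult[of "f r"]
      by (rule frac_le) (use bnd[OF F1 bnd[OF dc pqs]] fsm m0 fr ft e q0 c0 in \<open>auto intro: mult_left_mono\<close>)
    have r1: "(\<epsilon> * m * \<bar>f r\<bar> / 2 * q s) / (m * \<bar>f r\<bar>) = \<epsilon>/2 * q s" using m0 fr by simp
    have r2: "((\<epsilon> * \<bar>f r\<bar> * \<bar>f t\<bar> * m / (2 * c)) * (c * q s)) / (\<bar>f r\<bar> * \<bar>f t\<bar> * m) = \<epsilon>/2 * q s"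
      using m0 fr ft c0 by simp
    have "\<bar>(1 / f s - 1 / f r) - (- Df / (f r * f t)) * p s\<bar> \<le> \<epsilon>/2 * q s + \<epsilon>/2 * q s"
      unfolding id using t1 t2 r1 r2
        abs_triangle_ineq[of "- ((f s - f r) - Df * p s) / (f s * f r)" "((f s - f t) * (Df * p s)) / (f r * f t * f s)"]
      by linarith
    then show "\<bar>(1 / f s - 1 / f r) - (- Df / (f r * f t)) * p s\<bar> \<le> \<epsilon> * q s" by simp
  qed
qed

lemma quot:
  assumes f: "HD f Df" and g: "HD g Dg" and cf: "cont f" and cg: "cont g"
    and gt: "g t \<noteq> 0" and gr: "g r \<noteq> 0"
  shows "HD (\<lambda>s. f s / g s) ((Df * g t - f t * Dg) / (g r * g t))"
proof -
  have "HD (\<lambda>s. f s * (1 / g s)) (Df * (1 / g r) + f t * (- Dg / (g r * g t)))"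
    by (rule prod2[OF f recip[OF g cg gt gr] cf])
  moreover have "(\<lambda>s. f s * (1 / g s)) = (\<lambda>s. f s / g s)" by simp
  moreover have "Df * (1 / g r) + f t * (- Dg / (g r * g t)) = (Df * g t - f t * Dg) / (g r * g t)"
    using gt gr by (simp add: field_simps)
  ultimately show ?thesis by simp
qed

end

lemma rho_le:
  assumes "t \<in> T"
  shows "rho T t \<le> t"
proof (cases "{s\<in>T. s < t} = {}")
  case True
  then have "\<forall>s\<in>T. t \<le> s" by (auto simp: not_less)
  then have "bdd_below T" by (auto simp: bdd_below_def)
  then have "Inf T \<le> t" using assms by (simp add: cInf_lower)
  then show ?thesis using True by (simp add: rho_def)
next
  case False
  have "Sup {s\<in>T. s < t} \<le> t" using False by (intro cSup_least) auto
  moreover have "rho T t = Sup {s\<in>T. s < t}" using False unfolding rho_def by presburger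
  ultimately show ?thesis by simp
qed

lemma fpow_abs:
  assumes "in_A \<alpha>"
  shows "fpow \<alpha> \<bar>x\<bar> = \<bar>fpow \<alpha> x\<bar>"
proof -
  obtain q :: nat where q: "odd q" "q > 0" "\<alpha> = 1 / real q" using assms by (auto simp: in_A_def)
  then have "nat \<lfloor>1 / \<alpha>\<rfloor> = q" by simp
  then show ?thesis using assms q by (simp add: fpow_def real_root_abs)
qed

context fr_setup begin

lemma cont_of:
  fixes f :: "real \<Rightarrow> real"
  assumes "continuous_on T f" "t \<in> T"
  shows "cont f"
  unfolding cont_def
proof (intro allI impI)
  fix \<eta> :: real assume e: "\<eta> > 0"
  have "(f \<longlongrightarrow> f t) (at t within T)"
    using assms by (simp add: continuous_on_eq_continuous_within continuous_within)
  then have "eventually (\<lambda>x. dist (f x) (f t) < \<eta>) (at t within T)"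
    using e by (simp add: tendsto_iff)
  then obtain d where d: "d > 0" "\<forall>x\<in>T. x \<noteq> t \<and> dist x t < d \<longrightarrow> dist (f x) (f t) < \<eta>"
    unfolding eventually_at by blast
  show "\<exists>d>0. \<forall>s\<in>T. \<bar>s - t\<bar> < d \<longrightarrow> \<bar>f s - f t\<bar> < \<eta>"
    using d e by (intro exI[of _ d]) (auto simp: dist_real_def)
qed

end

theorem theorem3p10:
  fixes T :: "real set" and \<alpha> t Df Dg :: real and f g :: "real \<Rightarrow> real"
  assumes "time_scale T" and "0 < \<alpha>" and "\<alpha> \<le> 1" and "t \<in> T_kappa T"
    and hf: "has_nabla_frac_deriv T \<alpha> f Df t"
    and hg: "has_nabla_frac_deriv T \<alpha> g Dg t"
  shows "has_nabla_frac_deriv T \<alpha> (\<lambda>s. f s + g s) (Df + Dg) t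
    \<and> (\<forall>c::real. has_nabla_frac_deriv T \<alpha> (\<lambda>s. c * f s) (c * Df) t)
    \<and> (continuous_on T f \<longrightarrow> continuous_on T g \<longrightarrow>
           has_nabla_frac_deriv T \<alpha> (\<lambda>s. f s * g s) (Df * g t + f (rho T t) * Dg) t
         \<and> has_nabla_frac_deriv T \<alpha> (\<lambda>s. f s * g s) (Df * g (rho T t) + f t * Dg) t)
    \<and> (continuous_on T f \<longrightarrow> f (rho T t) * f t \<noteq> 0 \<longrightarrow>
           has_nabla_frac_deriv T \<alpha> (\<lambda>s. 1 / f s) (- Df / (f (rho T t) * f t)) t)
    \<and> (continuous_on T f \<longrightarrow> continuous_on T g \<longrightarrow> g (rho T t) * g t \<noteq> 0 \<longrightarrow>
           has_nabla_frac_deriv T \<alpha> (\<lambda>s. f s / g s)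
             ((Df * g t - f t * Dg) / (g (rho T t) * g t)) t)"
proof -
  have tT: "t \<in> T" using assms(4) by (auto simp: T_kappa_def split: if_splits)
  define r where "r = rho T t"
  have rt: "r \<le> t" using rho_le[OF tT] by (simp add: r_def)
  define P where "P = (\<lambda>\<delta> s. if in_A \<alpha> then t - \<delta> < s \<and> s < t + \<delta> else t \<le> s \<and> s < t + \<delta>)"
  define p where "p = (\<lambda>s. fpow \<alpha> (s - r))"
  define q where "q = (\<lambda>s. fpow \<alpha> \<bar>s - r\<bar>)"
  interpret fr: fr_setup T P p q r t
  proof
    show "\<And>d1 d2 s. d1 \<le> d2 \<Longrightarrow> P d1 s \<Longrightarrow> P d2 s" unfolding P_def by (auto split: if_splits)
    show "\<And>d s. P d s \<Longrightarrow> \<bar>s - t\<bar> < d" unfolding P_def by (auto split: if_splits)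
    show "\<And>d s. s \<in> T \<Longrightarrow> P d s \<Longrightarrow> \<bar>p s\<bar> \<le> q s"
    proof -
      fix d s assume "s \<in> T" "P d s"
      show "\<bar>p s\<bar> \<le> q s"
      proof (cases "in_A \<alpha>")
        case True then show ?thesis by (simp add: p_def q_def fpow_abs)
      next
        case False
        then have "t \<le> s" using \<open>P d s\<close> by (simp add: P_def)
        then have "\<bar>s - r\<bar> = s - r" using rt by simp
        then have "q s = p s" by (simp add: p_def q_def)
        moreover have "p s \<ge> 0" using False by (simp add: p_def fpow_def)
        ultimately show ?thesis by simp
      qed
    qed
  qed
  have eq: "\<And>h D. has_nabla_frac_deriv T \<alpha> h D t \<longleftrightarrow> t \<in> T_kappa T \<and> fr.HD h D"
    unfolding has_nabla_frac_deriv_def fr.HD_def unfolding P_def p_def q_def r_def by simp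
  have f: "fr.HD f Df" and g: "fr.HD g Dg" using hf hg eq by auto
  have k: "t \<in> T_kappa T" by fact
  show ?thesis
  proof (intro conjI allI impI)
    show "has_nabla_frac_deriv T \<alpha> (\<lambda>s. f s + g s) (Df + Dg) t"
      using eq k fr.add[OF f g] by blast
  next
    fix c show "has_nabla_frac_deriv T \<alpha> (\<lambda>s. c * f s) (c * Df) t"
      using eq k fr.scale[OF f] by blast
  next
    assume cf: "continuous_on T f" and cg: "continuous_on T g"
    show "has_nabla_frac_deriv T \<alpha> (\<lambda>s. f s * g s) (Df * g t + f (rho T t) * Dg) t"
      using eq k fr.prod1[OF f g fr.cont_of[OF cg tT]] unfolding r_def by blast
  next
    assume cf: "continuous_on T f" and cg: "continuous_on T g"
    show "has_nabla_frac_deriv T \<alpha> (\<lambda>s. f s * g s) (Df * g (rho T t) + f t * Dg) t"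
      using eq k fr.prod2[OF f g fr.cont_of[OF cf tT]] unfolding r_def by blast
  next
    assume cf: "continuous_on T f" and nz: "f (rho T t) * f t \<noteq> 0"
    show "has_nabla_frac_deriv T \<alpha> (\<lambda>s. 1 / f s) (- Df / (f (rho T t) * f t)) t"
      using eq k fr.recip[OF f fr.cont_of[OF cf tT]] nz unfolding r_def by auto
  next
    assume cf: "continuous_on T f" and cg: "continuous_on T g" and nz: "g (rho T t) * g t \<noteq> 0"
    show "has_nabla_frac_deriv T \<alpha> (\<lambda>s. f s / g s) ((Df * g t - f t * Dg) / (g (rho T t) * g t)) t"
      using eq k fr.quot[OF f g fr.cont_of[OF cf tT] fr.cont_of[OF cg tT]] nz unfolding r_def by auto
  qed
qed


end
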